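(* Let $\Gamma$ be an additive subgroup of $\mathbb{R}$ and let $\mu_1,\ldots,\mu_m\in\mathbb{R}$ be such that their classes in $\mathbb{R}/\langle\Gamma\rangle$ are $\mathbb{Q}$-linearly independent. Let $\Gamma'=\langle\Gamma\cup\{\mu_1,\ldots,\mu_m\}\rangle$, so that every $\alpha\in\Gamma'$ can be written uniquely as $\alpha=[\alpha]_\Gamma+\sum_{j=1}^m[\alpha]_{\mu_j}\mu_j$ with $[\alpha]_\Gamma\in\langle\Gamma\rangle$ and $[\alpha]_{\mu_j}\in\mathbb{Q}$. Then for every $j=1,\ldots,m$ there exists a derivation $\mathcal{D}_j$ of $\mathbb{C}((x^{\Gamma'}))$ (a $\mathbb{C}$-linear map satisfying the Leibniz rule) such that \[ \mathcal{D}_j\Big(\sum_{i\ge1}c_ix^{\alpha_i}\Big)=\sum_{i\ge1}c_i[\alpha_i]_{\mu_j}x^{\alpha_i}. \]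
   Context: $\Omega$ denotes the field of generalized power series $\sum_{i\ge1}c_i x^{\mu_i}$ with $c_i\in\mathbb{C}$, $\mu_i\in\mathbb{R}$ strictly increasing and tending to $\infty$ when there are infinitely many terms. For $E\subset\mathbb{R}$, $\langle E\rangle$ is the $\mathbb{Q}$-linear span of $E$ in $\mathbb{R}$. For an additive subgroup $G\subset\mathbb{R}$, $\mathbb{C}((x^{G}))\subset\Omega$ is the subfield of series whose support (set of exponents with non-zero coefficient) is contained in $G$. *)

theory Defs
  imports Complex_Main
begin

text \<open>Generalized power series sum c_i x^mu_i are represented by their coefficient
  function f :: real => complex (f a is the coefficient of x^a).  Membership in Omega:
  the exponents form a strictly increasing sequence tending to infinity if infinite,
  i.e. for every bound r only finitely many exponents are <= r.\<close>

definition gps_support :: "(real \<Rightarrow> complex) \<Rightarrow> real set" where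
  "gps_support f = {a. f a \<noteq> 0}"

definition Omega :: "(real \<Rightarrow> complex) set" where
  "Omega = {f. \<forall>r. finite {a. f a \<noteq> 0 \<and> a \<le> r}}"

definition gps_mult :: "(real \<Rightarrow> complex) \<Rightarrow> (real \<Rightarrow> complex) \<Rightarrow> (real \<Rightarrow> complex)" where
  "gps_mult f g = (\<lambda>c. \<Sum>a\<in>{a. f a \<noteq> 0 \<and> g (c - a) \<noteq> 0}. f a * g (c - a))"

definition qspan :: "real set \<Rightarrow> real set" where
  "qspan E = {x. \<exists>S q. finite S \<and> S \<subseteq> E \<and> (\<forall>s\<in>S. q s \<in> \<rat>) \<and> x = (\<Sum>s\<in>S. q s * s)}"

definition Cx :: "real set \<Rightarrow> (real \<Rightarrow> complex) set" where
  "Cx G = {f \<in> Omega. gps_support f \<subseteq> G}"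

text \<open>The coordinate [alpha]_{mu_j}: the rational coefficient of mu_j in the unique
  decomposition alpha = [alpha]_Gamma + sum_{k<m} [alpha]_{mu_k} mu_k.\<close>
definition mu_coord :: "real set \<Rightarrow> (nat \<Rightarrow> real) \<Rightarrow> nat \<Rightarrow> nat \<Rightarrow> real \<Rightarrow> real" where
  "mu_coord \<Gamma> \<mu> m j \<alpha> = (THE q. \<exists>r. (\<forall>k<m. r k \<in> \<rat>) \<and>
       \<alpha> - (\<Sum>k<m. r k * \<mu> k) \<in> qspan \<Gamma> \<and> r j = q)"

end

theory Submission
  imports Defs
begin

lemma qspan_zero: "0 \<in> qspan E"
  unfolding qspan_def by (rule CollectI, rule exI[of _ "{}"]) auto

lemma qspan_add:
  assumes "x \<in> qspan E" "y \<in> qspan E" shows "x + y \<in> qspan E"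
proof -
  obtain S1 q1 where 1: "finite S1" "S1 \<subseteq> E" "\<forall>s\<in>S1. q1 s \<in> \<rat>" "x = (\<Sum>s\<in>S1. q1 s * s)"
    using assms(1) unfolding qspan_def by blast
  obtain S2 q2 where 2: "finite S2" "S2 \<subseteq> E" "\<forall>s\<in>S2. q2 s \<in> \<rat>" "y = (\<Sum>s\<in>S2. q2 s * s)"
    using assms(2) unfolding qspan_def by blast
  define q where "q s = (if s \<in> S1 then q1 s else 0) + (if s \<in> S2 then q2 s else 0)" for s
  have "(\<Sum>s\<in>S1 \<union> S2. (if s \<in> S1 then q1 s else 0) * s) = (\<Sum>s\<in>S1. (if s \<in> S1 then q1 s else 0) * s)"
    by (rule sum.mono_neutral_right) (use 1 2 in auto)
  also have "\<dots> = x" unfolding 1(4) by (rule sum.cong) auto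
  finally have a: "(\<Sum>s\<in>S1 \<union> S2. (if s \<in> S1 then q1 s else 0) * s) = x" .
  have "(\<Sum>s\<in>S1 \<union> S2. (if s \<in> S2 then q2 s else 0) * s) = (\<Sum>s\<in>S2. (if s \<in> S2 then q2 s else 0) * s)"
    by (rule sum.mono_neutral_right) (use 1 2 in auto)
  also have "\<dots> = y" unfolding 2(4) by (rule sum.cong) auto
  finally have b: "(\<Sum>s\<in>S1 \<union> S2. (if s \<in> S2 then q2 s else 0) * s) = y" .
  have "x + y = (\<Sum>s\<in>S1 \<union> S2. q s * s)"
    unfolding q_def distrib_right sum.distrib a b ..
  moreover have "\<forall>s\<in>S1 \<union> S2. q s \<in> \<rat>" using 1 2 unfolding q_def by auto
  ultimately show ?thesis unfolding qspan_def using 1(1,2) 2(1,2)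
    by (intro CollectI exI[of _ "S1 \<union> S2"] exI[of _ q]) simp
qed

lemma qspan_smult:
  assumes "x \<in> qspan E" "c \<in> \<rat>" shows "c * x \<in> qspan E"
proof -
  obtain S q where 1: "finite S" "S \<subseteq> E" "\<forall>s\<in>S. q s \<in> \<rat>" "x = (\<Sum>s\<in>S. q s * s)"
    using assms(1) unfolding qspan_def by blast
  have "c * x = (\<Sum>s\<in>S. (c * q s) * s)" using 1 by (simp add: sum_distrib_left mult.assoc)
  moreover have "\<forall>s\<in>S. c * q s \<in> \<rat>" using 1 assms(2) by auto
  ultimately show ?thesis unfolding qspan_def using 1(1,2)
    by (intro CollectI exI[of _ S] exI[of _ "\<lambda>s. c * q s"]) simp
qed

lemma qspan_diff:
  assumes "x \<in> qspan E" "y \<in> qspan E" shows "x - y \<in> qspan E"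
proof -
  have "(-1) * y \<in> qspan E" by (rule qspan_smult[OF assms(2)]) simp
  from qspan_add[OF assms(1) this] show ?thesis by simp
qed

lemma qspan_elem:
  assumes "s \<in> E" "c \<in> \<rat>" shows "c * s \<in> qspan E"
  unfolding qspan_def using assms by (intro CollectI exI[of _ "{s}"] exI[of _ "\<lambda>_. c"]) auto

lemma decomp_exists:
  fixes m :: nat and \<mu> :: "nat \<Rightarrow> real"
  assumes "x \<in> qspan (\<Gamma> \<union> \<mu> ` {..<m})"
  shows "\<exists>r. (\<forall>k. r k \<in> \<rat>) \<and> x - (\<Sum>k<m. r k * \<mu> k) \<in> qspan \<Gamma>"
proof -
  obtain S q where 1: "finite S" "S \<subseteq> \<Gamma> \<union> \<mu> ` {..<m}" "\<forall>s\<in>S. q s \<in> \<rat>" "x = (\<Sum>s\<in>S. q s * s)"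
    using assms unfolding qspan_def by blast
  have "S \<subseteq> \<Gamma> \<union> \<mu> ` {..<m} \<longrightarrow> (\<forall>s\<in>S. q s \<in> \<rat>) \<longrightarrow>
     (\<exists>r. (\<forall>k. r k \<in> \<rat>) \<and> (\<Sum>s\<in>S. q s * s) - (\<Sum>k<m. r k * \<mu> k) \<in> qspan \<Gamma>)"
    using 1(1)
  proof (induction S rule: finite_induct)
    case empty
    show ?case by (intro impI exI[of _ "\<lambda>_. 0"]) (simp add: qspan_zero)
  next
    case (insert s F)
    show ?case
    proof (intro impI)
      assume A: "insert s F \<subseteq> \<Gamma> \<union> \<mu> ` {..<m}" "\<forall>t\<in>insert s F. q t \<in> \<rat>"
      then obtain r where r: "\<forall>k. r k \<in> \<rat>" "(\<Sum>s\<in>F. q s * s) - (\<Sum>k<m. r k * \<mu> k) \<in> qspan \<Gamma>"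
        using insert.IH by auto
      have qs: "q s \<in> \<rat>" using A by auto
      have sumins: "(\<Sum>t\<in>insert s F. q t * t) = q s * s + (\<Sum>t\<in>F. q t * t)"
        using insert.hyps by simp
      show "\<exists>r. (\<forall>k. r k \<in> \<rat>) \<and> (\<Sum>s\<in>insert s F. q s * s) - (\<Sum>k<m. r k * \<mu> k) \<in> qspan \<Gamma>"
      proof (cases "s \<in> \<Gamma>")
        case True
        have "q s * s + ((\<Sum>s\<in>F. q s * s) - (\<Sum>k<m. r k * \<mu> k)) \<in> qspan \<Gamma>"
          by (rule qspan_add[OF qspan_elem[OF True qs] r(2)])
        then show ?thesis using r(1) unfolding sumins by (intro exI[of _ r]) (simp add: algebra_simps)
      next
        case False
        then obtain k0 where k0: "k0 < m" "s = \<mu> k0" using A by auto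
        define r' where "r' k = r k + (if k = k0 then q s else 0)" for k
        have "(\<Sum>k<m. r' k * \<mu> k) = (\<Sum>k<m. r k * \<mu> k) + q s * s"
        proof -
          have "(\<Sum>k<m. (if k = k0 then q s else 0) * \<mu> k) = (\<Sum>k<m. if k = k0 then q s * \<mu> k0 else 0)"
            by (rule sum.cong) auto
          also have "\<dots> = q s * \<mu> k0" using k0(1) by simp
          also have "\<dots> = q s * s" using k0(2) by simp
          finally show ?thesis unfolding r'_def distrib_right sum.distrib by simp
        qed
        then have "(\<Sum>t\<in>insert s F. q t * t) - (\<Sum>k<m. r' k * \<mu> k) =
            (\<Sum>s\<in>F. q s * s) - (\<Sum>k<m. r k * \<mu> k)" unfolding sumins by simp
        moreover have "\<forall>k. r' k \<in> \<rat>" using r(1) qs by (simp add: r'_def)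
        ultimately show ?thesis using r(2) by metis
      qed
    qed
  qed
  then show ?thesis using 1 by simp
qed

lemma decomp_unique:
  fixes m :: nat and \<mu> :: "nat \<Rightarrow> real"
  assumes indep: "\<forall>q :: nat \<Rightarrow> real. (\<forall>k<m. q k \<in> \<rat>) \<and> (\<Sum>k<m. q k * \<mu> k) \<in> qspan \<Gamma>
                  \<longrightarrow> (\<forall>k<m. q k = 0)"
    and r: "\<forall>k<m. r k \<in> \<rat>" "x - (\<Sum>k<m. r k * \<mu> k) \<in> qspan \<Gamma>"
    and j: "j < m"
  shows "mu_coord \<Gamma> \<mu> m j x = r j"
  unfolding mu_coord_def
proof (rule the_equality)
  show "\<exists>r'. (\<forall>k<m. r' k \<in> \<rat>) \<and> x - (\<Sum>k<m. r' k * \<mu> k) \<in> qspan \<Gamma> \<and> r' j = r j"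
    using r by blast
next
  fix q assume "\<exists>r'. (\<forall>k<m. r' k \<in> \<rat>) \<and> x - (\<Sum>k<m. r' k * \<mu> k) \<in> qspan \<Gamma> \<and> r' j = q"
  then obtain r' where r': "\<forall>k<m. r' k \<in> \<rat>" "x - (\<Sum>k<m. r' k * \<mu> k) \<in> qspan \<Gamma>" "r' j = q"
    by blast
  have "(x - (\<Sum>k<m. r' k * \<mu> k)) - (x - (\<Sum>k<m. r k * \<mu> k)) \<in> qspan \<Gamma>"
    by (rule qspan_diff[OF r'(2) r(2)])
  also have "(x - (\<Sum>k<m. r' k * \<mu> k)) - (x - (\<Sum>k<m. r k * \<mu> k)) = (\<Sum>k<m. (r k - r' k) * \<mu> k)"
    by (simp add: left_diff_distrib sum_subtractf)
  finally have X: "(\<Sum>k<m. (r k - r' k) * \<mu> k) \<in> qspan \<Gamma>" .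
  have "\<forall>k<m. r k - r' k \<in> \<rat>" using r(1) r'(1) by auto
  with X have "\<forall>k<m. r k - r' k = 0" using spec[OF indep, of "\<lambda>k. r k - r' k"] by blast
  then show "q = r j" using j r'(3) by auto
qed

lemma coord_add:
  fixes m :: nat and \<mu> :: "nat \<Rightarrow> real"
  assumes indep: "\<forall>q :: nat \<Rightarrow> real. (\<forall>k<m. q k \<in> \<rat>) \<and> (\<Sum>k<m. q k * \<mu> k) \<in> qspan \<Gamma>
                  \<longrightarrow> (\<forall>k<m. q k = 0)"
    and a: "a \<in> qspan (\<Gamma> \<union> \<mu> ` {..<m})" and b: "b \<in> qspan (\<Gamma> \<union> \<mu> ` {..<m})"
    and j: "j < m"
  shows "mu_coord \<Gamma> \<mu> m j (a + b) = mu_coord \<Gamma> \<mu> m j a + mu_coord \<Gamma> \<mu> m j b"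
proof -
  obtain r where r: "\<forall>k. r k \<in> \<rat>" "a - (\<Sum>k<m. r k * \<mu> k) \<in> qspan \<Gamma>"
    using decomp_exists[OF a] by blast
  obtain s where s: "\<forall>k. s k \<in> \<rat>" "b - (\<Sum>k<m. s k * \<mu> k) \<in> qspan \<Gamma>"
    using decomp_exists[OF b] by blast
  have "(a - (\<Sum>k<m. r k * \<mu> k)) + (b - (\<Sum>k<m. s k * \<mu> k)) \<in> qspan \<Gamma>"
    by (rule qspan_add[OF r(2) s(2)])
  also have "(a - (\<Sum>k<m. r k * \<mu> k)) + (b - (\<Sum>k<m. s k * \<mu> k)) = (a + b) - (\<Sum>k<m. (r k + s k) * \<mu> k)"
    by (simp add: distrib_right sum.distrib)
  finally have ab: "(a + b) - (\<Sum>k<m. (r k + s k) * \<mu> k) \<in> qspan \<Gamma>" .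
  have "mu_coord \<Gamma> \<mu> m j (a + b) = r j + s j"
    using decomp_unique[OF indep _ ab j] r(1) s(1) by auto
  moreover have "mu_coord \<Gamma> \<mu> m j a = r j" using decomp_unique[OF indep _ r(2) j] r(1) by auto
  moreover have "mu_coord \<Gamma> \<mu> m j b = s j" using decomp_unique[OF indep _ s(2) j] s(1) by auto
  ultimately show ?thesis by simp
qed

lemma conv_finite:
  assumes f: "f \<in> Omega" and g: "g \<in> Omega"
  shows "finite {a. f a \<noteq> 0 \<and> g (c - a) \<noteq> 0}"
proof (cases "\<exists>b. g b \<noteq> 0")
  case False then show ?thesis by simp
next
  case True
  then obtain b where b: "g b \<noteq> 0" by blast
  define T where "T = {a. g a \<noteq> 0 \<and> a \<le> b}"
  have T: "finite T" "b \<in> T" using g b unfolding T_def Omega_def by auto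
  define b0 where "b0 = Min T"
  have low: "g a \<noteq> 0 \<Longrightarrow> b0 \<le> a" for a
  proof (cases "a \<le> b")
    case True
    assume "g a \<noteq> 0" then have "a \<in> T" using True unfolding T_def by simp
    then show ?thesis using T unfolding b0_def by simp
  next
    case False
    have "b0 \<le> b" using T unfolding b0_def by simp
    then show ?thesis using False by simp
  qed
  have "{a. f a \<noteq> 0 \<and> g (c - a) \<noteq> 0} \<subseteq> {a. f a \<noteq> 0 \<and> a \<le> c - b0}"
    using low by force
  moreover have "finite {a. f a \<noteq> 0 \<and> a \<le> c - b0}" using f unfolding Omega_def by simp
  ultimately show ?thesis by (rule finite_subset)
qed

theorem lemma1:
  fixes \<Gamma> :: "real set" and \<mu> :: "nat \<Rightarrow> real" and m :: nat
  assumes subgroup: "0 \<in> \<Gamma>" "\<forall>a\<in>\<Gamma>. \<forall>b\<in>\<Gamma>. a - b \<in> \<Gamma>"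
    and indep: "\<forall>q :: nat \<Rightarrow> real. (\<forall>k<m. q k \<in> \<rat>) \<and> (\<Sum>k<m. q k * \<mu> k) \<in> qspan \<Gamma>
                  \<longrightarrow> (\<forall>k<m. q k = 0)"
  shows "\<forall>j<m. \<exists>D :: (real \<Rightarrow> complex) \<Rightarrow> (real \<Rightarrow> complex).
     (\<forall>f\<in>Cx (qspan (\<Gamma> \<union> \<mu> ` {..<m})). D f \<in> Cx (qspan (\<Gamma> \<union> \<mu> ` {..<m}))) \<and>
     (\<forall>f\<in>Cx (qspan (\<Gamma> \<union> \<mu> ` {..<m})). \<forall>g\<in>Cx (qspan (\<Gamma> \<union> \<mu> ` {..<m})).
         D (\<lambda>a. f a + g a) = (\<lambda>a. D f a + D g a)) \<and>
     (\<forall>f\<in>Cx (qspan (\<Gamma> \<union> \<mu> ` {..<m})). \<forall>c::complex.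
         D (\<lambda>a. c * f a) = (\<lambda>a. c * D f a)) \<and>
     (\<forall>f\<in>Cx (qspan (\<Gamma> \<union> \<mu> ` {..<m})). \<forall>g\<in>Cx (qspan (\<Gamma> \<union> \<mu> ` {..<m})).
         D (gps_mult f g) = (\<lambda>a. gps_mult (D f) g a + gps_mult f (D g) a)) \<and>
     (\<forall>f\<in>Cx (qspan (\<Gamma> \<union> \<mu> ` {..<m})).
         D f = (\<lambda>a. complex_of_real (mu_coord \<Gamma> \<mu> m j a) * f a))"
proof (intro allI impI)
  fix j assume j: "j < m"
  define G where "G = qspan (\<Gamma> \<union> \<mu> ` {..<m})"
  define \<kappa> where "\<kappa> a = complex_of_real (mu_coord \<Gamma> \<mu> m j a)" for a
  define D where "D f = (\<lambda>a. \<kappa> a * f a)" for f :: "real \<Rightarrow> complex"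
  have P1: "D f \<in> Cx G" if "f \<in> Cx G" for f
  proof -
    have "{a. D f a \<noteq> 0 \<and> a \<le> r} \<subseteq> {a. f a \<noteq> 0 \<and> a \<le> r}" for r by (auto simp: D_def)
    then show ?thesis using that unfolding Cx_def Omega_def gps_support_def
      by (auto intro: finite_subset simp: D_def)
  qed
  have P4: "D (gps_mult f g) = (\<lambda>a. gps_mult (D f) g a + gps_mult f (D g) a)"
    if f: "f \<in> Cx G" and g: "g \<in> Cx G" for f g
  proof
    fix c
    define S where "S = {a. f a \<noteq> 0 \<and> g (c - a) \<noteq> 0}"
    have fin: "finite S" unfolding S_def using f g conv_finite unfolding Cx_def by blast
    have add: "\<kappa> c = \<kappa> a + \<kappa> (c - a)" if "a \<in> S" for a
    proof -
      have "a \<in> G" "c - a \<in> G" using that f g unfolding S_def Cx_def gps_support_def by auto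
      from coord_add[OF indep this[unfolded G_def] j] show ?thesis
        unfolding \<kappa>_def by simp
    qed
    have e1: "gps_mult (D f) g c = (\<Sum>a\<in>S. \<kappa> a * f a * g (c - a))"
      unfolding gps_mult_def D_def
      by (rule sum.mono_neutral_left[OF fin]) (auto simp: S_def)
    have e2: "gps_mult f (D g) c = (\<Sum>a\<in>S. f a * (\<kappa> (c - a) * g (c - a)))"
      unfolding gps_mult_def D_def
      by (rule sum.mono_neutral_left[OF fin]) (auto simp: S_def)
    have "D (gps_mult f g) c = (\<Sum>a\<in>S. \<kappa> c * (f a * g (c - a)))"
      unfolding D_def gps_mult_def S_def by (simp add: sum_distrib_left)
    also have "\<dots> = (\<Sum>a\<in>S. \<kappa> a * f a * g (c - a) + f a * (\<kappa> (c - a) * g (c - a)))"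
      by (rule sum.cong) (auto simp: add algebra_simps)
    also have "\<dots> = gps_mult (D f) g c + gps_mult f (D g) c"
      unfolding e1 e2 sum.distrib ..
    finally show "D (gps_mult f g) c = gps_mult (D f) g c + gps_mult f (D g) c" .
  qed
  show "\<exists>D :: (real \<Rightarrow> complex) \<Rightarrow> (real \<Rightarrow> complex).
     (\<forall>f\<in>Cx (qspan (\<Gamma> \<union> \<mu> ` {..<m})). D f \<in> Cx (qspan (\<Gamma> \<union> \<mu> ` {..<m}))) \<and>
     (\<forall>f\<in>Cx (qspan (\<Gamma> \<union> \<mu> ` {..<m})). \<forall>g\<in>Cx (qspan (\<Gamma> \<union> \<mu> ` {..<m})).
         D (\<lambda>a. f a + g a) = (\<lambda>a. D f a + D g a)) \<and>
     (\<forall>f\<in>Cx (qspan (\<Gamma> \<union> \<mu> ` {..<m})). \<forall>c::complex.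
         D (\<lambda>a. c * f a) = (\<lambda>a. c * D f a)) \<and>
     (\<forall>f\<in>Cx (qspan (\<Gamma> \<union> \<mu> ` {..<m})). \<forall>g\<in>Cx (qspan (\<Gamma> \<union> \<mu> ` {..<m})).
         D (gps_mult f g) = (\<lambda>a. gps_mult (D f) g a + gps_mult f (D g) a)) \<and>
     (\<forall>f\<in>Cx (qspan (\<Gamma> \<union> \<mu> ` {..<m})).
         D f = (\<lambda>a. complex_of_real (mu_coord \<Gamma> \<mu> m j a) * f a))"
  proof (intro exI[of _ D] conjI ballI allI)
    fix f assume "f \<in> Cx (qspan (\<Gamma> \<union> \<mu> ` {..<m}))"
    then show "D f \<in> Cx (qspan (\<Gamma> \<union> \<mu> ` {..<m}))" using P1 unfolding G_def by blast
  next
    fix f g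
    show "D (\<lambda>a. f a + g a) = (\<lambda>a. D f a + D g a)" unfolding D_def by (simp add: distrib_left)
  next
    fix f c
    show "D (\<lambda>a. c * f a) = (\<lambda>a. c * D f a)" unfolding D_def by (simp add: mult.left_commute)
  next
    fix f g assume "f \<in> Cx (qspan (\<Gamma> \<union> \<mu> ` {..<m}))" "g \<in> Cx (qspan (\<Gamma> \<union> \<mu> ` {..<m}))"
    then show "D (gps_mult f g) = (\<lambda>a. gps_mult (D f) g a + gps_mult f (D g) a)"
      using P4 unfolding G_def by blast
  next
    fix f
    show "D f = (\<lambda>a. complex_of_real (mu_coord \<Gamma> \<mu> m j a) * f a)" unfolding D_def \<kappa>_def ..
  qed
qed

end
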